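(* Let $k\in\mathbb{N}$ and let $u=a_1\cdots a_n$ be a word over a finite alphabet with attributes $(x_\ell,y_\ell)$. Let $i$ be the maximal position of $u$ such that $x_i+y_i>k+1$, and let $v=a_1\cdots a_{i-1}a_{i+1}\cdots a_n$, with $x'_\ell$ denoting the $x$-coordinate of position $\ell$ of $v$. Then $x'_{j-1}=x_j$ for all $j\in\{i+1,\dots,n\}$.
   Context: An X-ranker is a nonempty word over $\{\mathsf X_a : a\in A\}$, a Y-ranker a nonempty word over $\{\mathsf Y_a:a\in A\}$, length = word length. For a word $w$: $\mathsf X_a(w)$ is the smallest $a$-position, $r\mathsf X_a(w)$ the smallest $a$-position greater than $r(w)$; $\mathsf Y_a(w)$ the greatest $a$-position, $r\mathsf Y_a(w)$ the greatest $a$-position smaller than $r(w)$ (possibly undefined). The attribute of position $p$ of a word $w$ is $(x_p,y_p)$, where $x_p$ (the $x$-coordinate) is the minimal length of an X-ranker $r$ with $r(w)=p$ and $y_p$ is the minimal length of a Y-ranker $s$ with $s(w)=p$. *)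

theory Defs
  imports Main
begin

(* Words are lists; positions are 1-based: position q of w (1 <= q <= length w)
   carries the letter w ! (q - 1).  A ranker is a nonempty list of letters:
   the list [b1,...,bm] read as an X-ranker stands for X_b1 X_b2 ... X_bm,
   read as a Y-ranker for Y_b1 ... Y_bm; it is evaluated left to right. *)

definition apos :: "'a list \<Rightarrow> 'a \<Rightarrow> nat \<Rightarrow> bool" where
  "apos w a q \<longleftrightarrow> 1 \<le> q \<and> q \<le> length w \<and> w ! (q - 1) = a"

definition nextX :: "'a list \<Rightarrow> nat \<Rightarrow> 'a \<Rightarrow> nat option" where
  "nextX w p a = (if \<exists>q. apos w a q \<and> p < q
                  then Some (LEAST q. apos w a q \<and> p < q) else None)"

definition prevY :: "'a list \<Rightarrow> nat \<Rightarrow> 'a \<Rightarrow> nat option" where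
  "prevY w p a = (if \<exists>q. apos w a q \<and> q < p
                  then Some (GREATEST q. apos w a q \<and> q < p) else None)"

fun runX :: "'a list \<Rightarrow> nat \<Rightarrow> 'a list \<Rightarrow> nat option" where
  "runX w p [] = Some p"
| "runX w p (a # r) = (case nextX w p a of None \<Rightarrow> None | Some q \<Rightarrow> runX w q r)"

fun runY :: "'a list \<Rightarrow> nat \<Rightarrow> 'a list \<Rightarrow> nat option" where
  "runY w p [] = Some p"
| "runY w p (a # r) = (case prevY w p a of None \<Rightarrow> None | Some q \<Rightarrow> runY w q r)"

definition xrank :: "'a list \<Rightarrow> 'a list \<Rightarrow> nat option" where
  "xrank w r = (if r = [] then None else runX w 0 r)"

definition yrank :: "'a list \<Rightarrow> 'a list \<Rightarrow> nat option" where
  "yrank w r = (if r = [] then None else runY w (length w + 1) r)"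

definition xcoord :: "'a list \<Rightarrow> nat \<Rightarrow> nat" where
  "xcoord w p = (LEAST m. \<exists>r. length r = m \<and> xrank w r = Some p)"

definition ycoord :: "'a list \<Rightarrow> nat \<Rightarrow> nat" where
  "ycoord w p = (LEAST m. \<exists>r. length r = m \<and> yrank w r = Some p)"

end

theory Submission
  imports Defs
begin

definition edge :: "'a list \<Rightarrow> nat \<Rightarrow> nat \<Rightarrow> bool" where
  "edge w p q \<longleftrightarrow> p < q \<and> q \<le> length w \<and> (\<forall>t. p < t \<and> t < q \<longrightarrow> w ! (t - 1) \<noteq> w ! (q - 1))"

definition xd :: "'a list \<Rightarrow> nat \<Rightarrow> nat" where
  "xd w p = (if p = 0 then 0 else xcoord w p)"

lemma nextX_Some:
  assumes "p < q" "q \<le> length w" "w ! (q - 1) = a" "\<forall>t. p < t \<and> t < q \<longrightarrow> w ! (t - 1) \<noteq> a"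
  shows "nextX w p a = Some q"
proof -
  have P: "apos w a q \<and> p < q" using assms by (auto simp: apos_def)
  have "(LEAST q. apos w a q \<and> p < q) = q"
  proof (rule Least_equality)
    show "apos w a q \<and> p < q" by (rule P)
    fix y assume "apos w a y \<and> p < y"
    then show "q \<le> y" using assms(4) by (metis One_nat_def apos_def not_le_imp_less)
  qed
  then show ?thesis using P unfolding nextX_def by auto
qed

lemma nextX_SomeD:
  assumes "nextX w p a = Some q"
  shows "edge w p q \<and> w ! (q - 1) = a"
proof -
  have ex: "\<exists>q. apos w a q \<and> p < q" using assms unfolding nextX_def by (auto split: if_splits)
  then have qd: "q = (LEAST q. apos w a q \<and> p < q)" using assms unfolding nextX_def by auto
  have P: "apos w a q \<and> p < q" using LeastI_ex[OF ex] qd by simp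
  have "\<forall>t. p < t \<and> t < q \<longrightarrow> w ! (t - 1) \<noteq> a"
  proof (intro allI impI notI)
    fix t assume t: "p < t \<and> t < q" and e: "w ! (t - 1) = a"
    have "apos w a t \<and> p < t" using t e P by (auto simp: apos_def)
    then have "q \<le> t" using qd by (simp add: Least_le)
    then show False using t by simp
  qed
  then show ?thesis using P by (auto simp: edge_def apos_def)
qed

lemma prevY_Some:
  assumes "1 \<le> q" "q < p" "q \<le> length w" "w ! (q - 1) = a" "\<forall>t. q < t \<and> t < p \<longrightarrow> w ! (t - 1) \<noteq> a"
  shows "prevY w p a = Some q"
proof -
  have P: "apos w a q \<and> q < p" using assms by (auto simp: apos_def)
  have "(GREATEST q. apos w a q \<and> q < p) = q"
  proof (rule Greatest_equality)
    show "apos w a q \<and> q < p" by (rule P)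
    fix y assume "apos w a y \<and> y < p"
    then show "y \<le> q" using assms(5) by (auto simp: apos_def) (metis not_le_imp_less)
  qed
  then show ?thesis using P unfolding prevY_def by auto
qed

lemma runX_snoc: "runX w p (r @ [a]) = (case runX w p r of None \<Rightarrow> None | Some q \<Rightarrow> nextX w q a)"
  by (induction r arbitrary: p) (auto split: option.split)

lemma runY_snoc: "runY w p (r @ [a]) = (case runY w p r of None \<Rightarrow> None | Some q \<Rightarrow> prevY w q a)"
  by (induction r arbitrary: p) (auto split: option.split)

lemma runX_mono: "runX w p r = Some q \<Longrightarrow> r \<noteq> [] \<Longrightarrow> p < q \<and> q \<le> length w"
proof (induction r arbitrary: p)
  case Nil then show ?case by simp
next
  case (Cons a r)
  then obtain q' where q': "nextX w p a = Some q'" and rr: "runX w q' r = Some q"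
    by (auto split: option.splits)
  have e: "p < q' \<and> q' \<le> length w" using nextX_SomeD[OF q'] by (auto simp: edge_def)
  show ?case
  proof (cases "r = []")
    case True then show ?thesis using rr e by simp
  next
    case False then show ?thesis using Cons.IH[OF rr] e by simp
  qed
qed

lemma X_exists: "1 \<le> q \<Longrightarrow> q \<le> length w \<Longrightarrow> \<exists>r. xrank w r = Some q"
proof (induction q)
  case 0 then show ?case by simp
next
  case (Suc q)
  show ?case
  proof (cases "q = 0")
    case True
    have "nextX w 0 (w ! 0) = Some 1" using Suc True by (intro nextX_Some) auto
    then have "xrank w [w ! 0] = Some (Suc q)" using True by (simp add: xrank_def)
    then show ?thesis by blast
  next
    case False
    then obtain r where r: "xrank w r = Some q" using Suc by auto
    have rn: "r \<noteq> []" using r by (auto simp: xrank_def)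
    have "nextX w q (w ! q) = Some (Suc q)" using Suc by (intro nextX_Some) auto
    then have "xrank w (r @ [w ! q]) = Some (Suc q)" using r rn by (simp add: xrank_def runX_snoc)
    then show ?thesis by blast
  qed
qed

lemma Y_exists_aux: "\<forall>q. length w - q = d \<longrightarrow> 1 \<le> q \<longrightarrow> q \<le> length w \<longrightarrow> (\<exists>r. yrank w r = Some q)"
proof (induction d)
  case 0
  show ?case
  proof (intro allI impI)
    fix q assume "length w - q = 0" "1 \<le> q" "q \<le> length w"
    then have q: "q = length w" by simp
    have "prevY w (length w + 1) (w ! (q - 1)) = Some q" using q \<open>1 \<le> q\<close> by (intro prevY_Some) auto
    then have "yrank w [w ! (q - 1)] = Some q" by (simp add: yrank_def)
    then show "\<exists>r. yrank w r = Some q" by blast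
  qed
next
  case (Suc d)
  show ?case
  proof (intro allI impI)
    fix q assume h: "length w - q = Suc d" "1 \<le> q" "q \<le> length w"
    have "length w - (q + 1) = d" "1 \<le> q + 1" "q + 1 \<le> length w" using h by auto
    then obtain r where r: "yrank w r = Some (q + 1)" using Suc.IH by blast
    have rn: "r \<noteq> []" using r by (auto simp: yrank_def)
    have "prevY w (q + 1) (w ! (q - 1)) = Some q" using h by (intro prevY_Some) auto
    then have "yrank w (r @ [w ! (q - 1)]) = Some q" using r rn by (simp add: yrank_def runY_snoc)
    then show "\<exists>r. yrank w r = Some q" by blast
  qed
qed

lemma Y_exists: "1 \<le> q \<Longrightarrow> q \<le> length w \<Longrightarrow> \<exists>r. yrank w r = Some q"
  using Y_exists_aux by blast

lemma xcoord_ex: "1 \<le> q \<Longrightarrow> q \<le> length w \<Longrightarrow> \<exists>r. length r = xcoord w q \<and> xrank w r = Some q"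
proof -
  assume h: "1 \<le> q" "q \<le> length w"
  obtain r where "xrank w r = Some q" using X_exists[OF h] by blast
  then have "\<exists>m r. length r = m \<and> xrank w r = Some q" by blast
  then show ?thesis unfolding xcoord_def by (rule LeastI_ex)
qed

lemma xcoord_le: "xrank w r = Some q \<Longrightarrow> xcoord w q \<le> length r"
  unfolding xcoord_def by (rule Least_le) blast

lemma ycoord_ex: "1 \<le> q \<Longrightarrow> q \<le> length w \<Longrightarrow> \<exists>r. length r = ycoord w q \<and> yrank w r = Some q"
proof -
  assume h: "1 \<le> q" "q \<le> length w"
  obtain r where "yrank w r = Some q" using Y_exists[OF h] by blast
  then have "\<exists>m r. length r = m \<and> yrank w r = Some q" by blast
  then show ?thesis unfolding ycoord_def by (rule LeastI_ex)
qed

lemma ycoord_le: "yrank w r = Some q \<Longrightarrow> ycoord w q \<le> length r"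
  unfolding ycoord_def by (rule Least_le) blast

lemma xd_A: assumes "edge w p q" shows "xd w q \<le> xd w p + 1"
proof -
  have nx: "nextX w p (w ! (q - 1)) = Some q" using assms by (intro nextX_Some) (auto simp: edge_def)
  show ?thesis
  proof (cases "p = 0")
    case True
    then have "xrank w [w ! (q - 1)] = Some q" using nx by (simp add: xrank_def)
    then have "xcoord w q \<le> 1" using xcoord_le by fastforce
    then show ?thesis using True assms by (simp add: xd_def edge_def)
  next
    case False
    then obtain r where r: "length r = xcoord w p" "xrank w r = Some p"
      using xcoord_ex[of p w] assms by (auto simp: edge_def)
    have rn: "r \<noteq> []" using r by (auto simp: xrank_def)
    have "xrank w (r @ [w ! (q - 1)]) = Some q" using r rn nx by (simp add: xrank_def runX_snoc)
    then have "xcoord w q \<le> xcoord w p + 1" using xcoord_le r by fastforce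
    then show ?thesis using False assms by (simp add: xd_def edge_def)
  qed
qed

lemma xd_B: assumes "1 \<le> q" "q \<le> length w" shows "\<exists>p. edge w p q \<and> xd w q = xd w p + 1"
proof -
  obtain r where r: "length r = xcoord w q" "xrank w r = Some q" using xcoord_ex assms by blast
  have rn: "r \<noteq> []" using r by (auto simp: xrank_def)
  show ?thesis
  proof (cases "butlast r = []")
    case True
    obtain b where b: "r = [b]" using True rn by (cases r) (auto split: if_splits)
    have "runX w 0 [b] = Some q" using r(2) b by (simp add: xrank_def)
    then have "nextX w 0 b = Some q" by (simp split: option.splits)
    then have e: "edge w 0 q" using nextX_SomeD by metis
    have "length r = 1" using b by simp
    then show ?thesis using e r assms by (auto simp: xd_def)
  next
    case False
    have "runX w 0 r = Some q" using r rn by (simp add: xrank_def)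
    then have "runX w 0 (butlast r @ [last r]) = Some q" using append_butlast_last_id[OF rn] by simp
    then obtain p where p: "runX w 0 (butlast r) = Some p" "nextX w p (last r) = Some q"
      by (auto simp: runX_snoc split: option.splits)
    have e: "edge w p q" using nextX_SomeD[OF p(2)] by blast
    have pp: "0 < p" using runX_mono[OF p(1) False] by simp
    have "xcoord w p \<le> length (butlast r)" using xcoord_le[of w "butlast r" p] p(1) False
      by (simp add: xrank_def)
    moreover have "0 < length r" using rn by simp
    ultimately have "xd w p + 1 \<le> xd w q" using pp r assms by (simp add: xd_def)
    then show ?thesis using xd_A[OF e] e by (intro exI[of _ p]) auto
  qed
qed


theorem lemma17:
  fixes k :: nat and u :: "'a list" and i :: nat
  assumes "1 \<le> i" and "i \<le> length u"
    and "xcoord u i + ycoord u i > k + 1"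
    and "\<forall>l. 1 \<le> l \<and> l \<le> length u \<and> xcoord u l + ycoord u l > k + 1 \<longrightarrow> l \<le> i"
  shows "\<forall>j. i + 1 \<le> j \<and> j \<le> length u \<longrightarrow>
           xcoord (take (i - 1) u @ drop i u) (j - 1) = xcoord u j"
proof -
  define n where "n = length u"
  define a where "a = u ! (i - 1)"
  define v where "v = take (i - 1) u @ drop i u"
  have lenv: "length v = n - 1" using assms(1,2) by (simp add: v_def n_def)
  have vnth: "v ! (p - 1) = (if p < i then u ! (p - 1) else u ! p)" if "1 \<le> p" "p \<le> n - 1" for p
  proof -
    have lt: "length (take (i - 1) u) = i - 1" using assms(2) by simp
    have "v ! (p - 1) = (if p - 1 < i - 1 then take (i - 1) u ! (p - 1) else drop i u ! (p - 1 - (i - 1)))"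
      unfolding v_def nth_append lt by simp
    moreover have "p - 1 < i - 1 \<longleftrightarrow> p < i" using that assms(1) by arith
    moreover have "p - 1 < i - 1 \<Longrightarrow> take (i - 1) u ! (p - 1) = u ! (p - 1)" by simp
    moreover have "\<not> p - 1 < i - 1 \<Longrightarrow> drop i u ! (p - 1 - (i - 1)) = u ! p"
    proof -
      assume "\<not> p - 1 < i - 1"
      then have e: "i + (p - 1 - (i - 1)) = p" using that assms(1) by arith
      have "p - 1 - (i - 1) < length (drop i u)" using that assms(1,2) n_def \<open>\<not> p - 1 < i - 1\<close> by simp
      then show ?thesis using e by (simp add: nth_drop)
    qed
    ultimately show ?thesis by auto
  qed
  have vR: "v ! (p - 1) = u ! p" if "1 \<le> p" "p \<le> n - 1" "i \<le> p" for p
    using vnth[OF that(1,2)] that(3) by simp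
  have vL: "v ! (p - 1) = u ! (p - 1)" if "1 \<le> p" "p < i" for p
  proof -
    have "p \<le> n - 1" using that assms(2) n_def by arith
    then show ?thesis using vnth[OF that(1)] that(2) by simp
  qed
  have Ytrick: "xd u q' \<le> xd u i" if q': "i < q'" "q' \<le> n" "\<forall>t. i < t \<and> t < q' \<longrightarrow> u ! (t - 1) \<noteq> a" for q'
  proof -
    have pv: "prevY u q' a = Some i" using q' assms(1,2) by (intro prevY_Some) (auto simp: a_def n_def)
    obtain r where r: "length r = ycoord u q'" "yrank u r = Some q'" using ycoord_ex[of q' u] q' n_def by auto
    have rn: "r \<noteq> []" using r by (auto simp: yrank_def)
    have "yrank u (r @ [a]) = Some i" using r rn pv by (simp add: yrank_def runY_snoc)
    then have y: "ycoord u i \<le> ycoord u q' + 1" using ycoord_le r by fastforce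
    have "\<not> xcoord u q' + ycoord u q' > k + 1"
    proof
      assume h: "xcoord u q' + ycoord u q' > k + 1"
      have "1 \<le> q'" using q' assms(1) by simp
      then have "q' \<le> i" using assms(4) h q' n_def by blast
      then show False using q' by simp
    qed
    then have "xcoord u q' \<le> xcoord u i" using y assms(3) by linarith
    then show ?thesis using q' assms(1) by (simp add: xd_def)
  qed
  have prefix: "xd v p = xd u p" if "p < i" for p
    using that
  proof (induction p rule: less_induct)
    case (less p)
    show ?case
    proof (cases "p = 0")
      case True then show ?thesis by (simp add: xd_def)
    next
      case False
      have pn: "p \<le> n - 1" using less.prems assms(2) n_def by simp
      have vl: "v ! (t - 1) = u ! (t - 1)" if "1 \<le> t" "t \<le> p" for t
        using vnth[of t] that pn less.prems by auto
      have ee: "edge v p' p \<longleftrightarrow> edge u p' p" for p'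
      proof -
        have "(\<forall>t. p' < t \<and> t < p \<longrightarrow> v ! (t - 1) \<noteq> v ! (p - 1)) \<longleftrightarrow>
              (\<forall>t. p' < t \<and> t < p \<longrightarrow> u ! (t - 1) \<noteq> u ! (p - 1))"
          using vl False by auto
        then show ?thesis unfolding edge_def using lenv pn n_def by auto
      qed
      have pu: "1 \<le> p" "p \<le> length u" using False pn n_def by auto
      obtain p1 where p1: "edge u p1 p" "xd u p = xd u p1 + 1" using xd_B[OF pu] by blast
      have "xd v p \<le> xd v p1 + 1" using xd_A ee p1 by blast
      moreover have "xd v p1 = xd u p1" using less.IH p1 less.prems by (auto simp: edge_def)
      ultimately have le1: "xd v p \<le> xd u p" using p1 by simp
      obtain p2 where p2: "edge v p2 p" "xd v p = xd v p2 + 1" using xd_B[of p v] False pn lenv by auto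
      have "xd u p \<le> xd u p2 + 1" using xd_A ee p2 by blast
      moreover have "xd v p2 = xd u p2" using less.IH p2 less.prems by (auto simp: edge_def)
      ultimately show ?thesis using le1 p2 by simp
    qed
  qed
  have main: "xd v (q - 1) = xd u q" if "i < q" "q \<le> n" for q
    using that
  proof (induction q rule: less_induct)
    case (less q)
    have IH': "xd v (p - 1) = xd u p" if "i < p" "p < q" for p
      using less.IH that less.prems by auto
    define c where "c = u ! (q - 1)"
    have vq: "v ! (q - 1 - 1) = c" using vnth[of "q - 1"] less.prems assms(1) c_def by auto
    have claim1: "xd v (q - 1) \<le> xd u p + 1" if "p < q" "p \<noteq> i" "edge u p q" for p
    proof (cases "p < i")
      case True
      have "edge v p (q - 1)" unfolding edge_def
      proof (intro conjI allI impI)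
        show "p < q - 1" using True less.prems by simp
        show "q - 1 \<le> length v" using lenv less.prems by simp
        fix t assume t: "p < t \<and> t < q - 1"
        show "v ! (t - 1) \<noteq> v ! (q - 1 - 1)"
        proof (cases "t < i")
          case True
          then have "v ! (t - 1) = u ! (t - 1)" using vnth[of t] t less.prems by auto
          then show ?thesis using vq c_def \<open>edge u p q\<close> t unfolding edge_def by auto
        next
          case False
          then have "v ! (t - 1) = u ! (Suc t - 1)" using vnth[of t] t less.prems by auto
          moreover have "p < Suc t \<and> Suc t < q" using t by arith
          moreover have "u ! (Suc t - 1) \<noteq> c" using \<open>edge u p q\<close> calculation(2) c_def unfolding edge_def by blast
          ultimately show ?thesis using vq by simp
        qed
      qed
      then have "xd v (q - 1) \<le> xd v p + 1" by (rule xd_A)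
      then show ?thesis using prefix[OF True] by simp
    next
      case False
      then have pi: "i < p" using that by simp
      have "edge v (p - 1) (q - 1)" unfolding edge_def
      proof (intro conjI allI impI)
        show "p - 1 < q - 1" using pi that by simp
        show "q - 1 \<le> length v" using lenv less.prems by simp
        fix t assume t: "p - 1 < t \<and> t < q - 1"
        then have "v ! (t - 1) = u ! (Suc t - 1)" using vnth[of t] pi less.prems by auto
        moreover have "p < Suc t \<and> Suc t < q" using t pi by arith
        moreover have "u ! (Suc t - 1) \<noteq> c" using \<open>edge u p q\<close> calculation(2) c_def unfolding edge_def by blast
        ultimately show "v ! (t - 1) \<noteq> v ! (q - 1 - 1)" using vq by simp
      qed
      then have "xd v (q - 1) \<le> xd v (p - 1) + 1" by (rule xd_A)
      then show ?thesis using IH'[OF pi that(1)] by simp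
    qed
    have dir1: "xd v (q - 1) \<le> xd u q"
    proof -
      obtain p where p: "edge u p q" "xd u q = xd u p + 1" using xd_B[of q u] less.prems assms(1) n_def by auto
      show ?thesis
      proof (cases "p = i")
        case False
        then show ?thesis using claim1[of p] p by (auto simp: edge_def)
      next
        case True
        show ?thesis
        proof (cases "\<exists>t. i < t \<and> t < q \<and> u ! (t - 1) = a")
          case False
          then have "xd u q \<le> xd u i" using Ytrick[of q] less.prems by auto
          then show ?thesis using p True by simp
        next
          case True2: True
          define i' where "i' = (LEAST t. i < t \<and> t < q \<and> u ! (t - 1) = a)"
          have i'p: "i < i' \<and> i' < q \<and> u ! (i' - 1) = a" using LeastI_ex[OF True2] i'_def by simp
          have i'm: "\<forall>t. i < t \<and> t < i' \<longrightarrow> u ! (t - 1) \<noteq> a"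
          proof (intro allI impI notI)
            fix t assume "i < t \<and> t < i'" "u ! (t - 1) = a"
            then have "i' \<le> t" using i'p unfolding i'_def by (intro Least_le) auto
            then show False using \<open>i < t \<and> t < i'\<close> by simp
          qed
          have "xd u i' \<le> xd u i" using Ytrick[of i'] i'p i'm less.prems by auto
          moreover have "edge u i' q" using p(1) True i'p unfolding edge_def by auto
          ultimately show ?thesis using claim1[of i'] i'p p True by fastforce
        qed
      qed
    qed
    have dir2: "xd u q \<le> xd v (q - 1)"
    proof -
      have qv: "1 \<le> q - 1" "q - 1 \<le> length v" using less.prems assms(1) lenv by auto
      obtain p' where p': "edge v p' (q - 1)" "xd v (q - 1) = xd v p' + 1"
        using xd_B[OF qv] by blast
      have p'q: "p' < q - 1" using p'(1) unfolding edge_def by blast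
      have vt: "v ! (t - 1) \<noteq> c" if "p' < t" "t < q - 1" for t
      proof -
        have "v ! (t - 1) \<noteq> v ! (q - 1 - 1)" using p'(1) that unfolding edge_def by blast
        then show ?thesis using vq by simp
      qed
      show ?thesis
      proof (cases "i \<le> p'")
        case True
        have "edge u (p' + 1) q" unfolding edge_def
        proof (intro conjI allI impI)
          show "p' + 1 < q" using p'q by arith
          show "q \<le> length u" using less.prems n_def by simp
          fix t assume t: "p' + 1 < t \<and> t < q"
          have h: "1 \<le> t - 1" "t - 1 \<le> n - 1" "i \<le> t - 1" using t True less.prems by arith+
          have "v ! (t - 1 - 1) = u ! (t - 1)" using vR[OF h] t by simp
          moreover have "p' < t - 1" "t - 1 < q - 1" using t by arith+
          then have "v ! (t - 1 - 1) \<noteq> c" by (rule vt)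
          ultimately show "u ! (t - 1) \<noteq> u ! (q - 1)" using c_def by simp
        qed
        then have "xd u q \<le> xd u (p' + 1) + 1" by (rule xd_A)
        moreover have "i < p' + 1" "p' + 1 < q" using True p'q by arith+
        then have "xd v (p' + 1 - 1) = xd u (p' + 1)" by (rule IH')
        ultimately show ?thesis using p' by simp
      next
        case False
        have pre: "xd v p' = xd u p'" using prefix False by simp
        show ?thesis
        proof (cases "a = c")
          case False2: False
          have "edge u p' q" unfolding edge_def
          proof (intro conjI allI impI)
            show "p' < q" using p'q by arith
            show "q \<le> length u" using less.prems n_def by simp
            fix t assume t: "p' < t \<and> t < q"
            show "u ! (t - 1) \<noteq> u ! (q - 1)"
            proof (cases "t < i")
              case True
              have h: "1 \<le> t" "t < i" using t True by arith+
              have "t < q - 1" using True less.prems by arith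
              then have "v ! (t - 1) \<noteq> c" using vt t by blast
              then show ?thesis using vL[OF h] c_def by simp
            next
              case False3: False
              show ?thesis
              proof (cases "t = i")
                case True
                then show ?thesis using False2 a_def c_def by simp
              next
                case False
                have h: "1 \<le> t - 1" "t - 1 \<le> n - 1" "i \<le> t - 1" using t False3 False less.prems assms(1) by arith+
                have "v ! (t - 1 - 1) = u ! (t - 1)" using vR[OF h] h by simp
                moreover have "p' < t - 1" "t - 1 < q - 1" using t False3 False \<open>\<not> i \<le> p'\<close> by arith+
                then have "v ! (t - 1 - 1) \<noteq> c" by (rule vt)
                ultimately show ?thesis using c_def by simp
              qed
            qed
          qed
          then have "xd u q \<le> xd u p' + 1" by (rule xd_A)
          then show ?thesis using p' pre by simp
        next
          case True
          have "\<forall>t. i < t \<and> t < q \<longrightarrow> u ! (t - 1) \<noteq> a"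
          proof (intro allI impI)
            fix t assume t: "i < t \<and> t < q"
            have h: "1 \<le> t - 1" "t - 1 \<le> n - 1" "i \<le> t - 1" using t less.prems assms(1) by arith+
            have "v ! (t - 1 - 1) = u ! (t - 1)" using vR[OF h] h by simp
            moreover have "p' < t - 1" "t - 1 < q - 1" using t False by arith+
            then have "v ! (t - 1 - 1) \<noteq> c" by (rule vt)
            ultimately show "u ! (t - 1) \<noteq> a" using True by simp
          qed
          then have "xd u q \<le> xd u i" using Ytrick[of q] less.prems by blast
          moreover have "edge u p' i" unfolding edge_def
          proof (intro conjI allI impI)
            show "p' < i" using False by simp
            show "i \<le> length u" using assms(2) .
            fix t assume t: "p' < t \<and> t < i"
            have h: "1 \<le> t" "t < i" using t by arith+
            have "t < q - 1" using t less.prems by arith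
            then have "v ! (t - 1) \<noteq> c" using vt t by blast
            then show "u ! (t - 1) \<noteq> u ! (i - 1)"
              using vL[OF h] True a_def by simp
          qed
          then have "xd u i \<le> xd u p' + 1" by (rule xd_A)
          ultimately show ?thesis using p' pre by simp
        qed
      qed
    qed
    show ?case using dir1 dir2 by simp
  qed
  show ?thesis
  proof (intro allI impI)
    fix j assume j: "i + 1 \<le> j \<and> j \<le> length u"
    have "xd v (j - 1) = xd u j" using main[of j] j n_def by auto
    then show "xcoord (take (i - 1) u @ drop i u) (j - 1) = xcoord u j"
      using j assms(1) by (simp add: xd_def v_def split: if_splits)
  qed
qed

end
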